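(* Let $A$ be a closed linear operator in a sequentially complete locally convex space $E$. Let $(\lambda_n)_{n\in\mathbb N}$ be a sequence in the resolvent set $\rho(A)$ with $\lim_{n\to\infty}|\lambda_n|=\infty$, and suppose there exist $C>0$ and $k\ge -1$ such that for every $p\in\circledast$ there exists $q\in\circledast$ with $$p(R(\lambda_n:A)x)\le C|\lambda_n|^k q(x)\quad\text{for all }x\in E,\ n\in\mathbb N.$$ Then $A$ is stationary dense and $n(A)\le k+2$.
   Context: $E$ is a Hausdorff sequentially complete locally convex space whose topology is given by a family $\circledast$ of continuous seminorms. $\rho(A)$ is the set of $\lambda\in\mathbb C$ for which $\lambda-A:D(A)\to E$ is bijective with continuous inverse $R(\lambda:A)=(\lambda-A)^{-1}$. $A$ is called stationary dense if $n(A):=\inf\{k\in\mathbb N_0:\ D(A^m)\subseteq\overline{D(A^{m+1})}\ \text{for all } m\ge k\}<\infty$. *)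

theory Defs
  imports "HOL-Analysis.Analysis"
begin

definition seminorm :: "(complex \<Rightarrow> 'a::ab_group_add \<Rightarrow> 'a) \<Rightarrow> ('a \<Rightarrow> real) \<Rightarrow> bool" where
  "seminorm sm p \<longleftrightarrow> (\<forall>x. 0 \<le> p x) \<and> (\<forall>x y. p (x + y) \<le> p x + p y)
     \<and> (\<forall>c x. p (sm c x) = cmod c * p x)"

definition seminorm_topology :: "('a::ab_group_add \<Rightarrow> real) set \<Rightarrow> 'a topology" where
  "seminorm_topology P = topology (\<lambda>U. \<forall>x\<in>U. \<exists>F \<epsilon>. finite F \<and> F \<subseteq> P \<and> \<epsilon> > 0 \<and>
       {y. \<forall>p\<in>F. p (y - x) < \<epsilon>} \<subseteq> U)"

definition seq_complete_lcs :: "(complex \<Rightarrow> 'a::ab_group_add \<Rightarrow> 'a) \<Rightarrow> ('a \<Rightarrow> real) set \<Rightarrow> bool" where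
  "seq_complete_lcs sm P \<longleftrightarrow> vector_space sm \<and> (\<forall>p\<in>P. seminorm sm p) \<and> Hausdorff_space (seminorm_topology P) \<and>
     (\<forall>x :: nat \<Rightarrow> 'a. (\<forall>p\<in>P. \<forall>\<epsilon>>0. \<exists>N. \<forall>m\<ge>N. \<forall>n\<ge>N. p (x m - x n) < \<epsilon>) \<longrightarrow>
        (\<exists>l. limitin (seminorm_topology P) x l sequentially))"

text \<open>Linear operator A with domain D (values of A outside D are irrelevant).\<close>
definition linear_operator :: "(complex \<Rightarrow> 'a::ab_group_add \<Rightarrow> 'a) \<Rightarrow> 'a set \<Rightarrow> ('a \<Rightarrow> 'a) \<Rightarrow> bool" where
  "linear_operator sm D A \<longleftrightarrow> 0 \<in> D \<and> (\<forall>x\<in>D. \<forall>y\<in>D. x + y \<in> D) \<and> (\<forall>c. \<forall>x\<in>D. sm c x \<in> D)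
     \<and> (\<forall>x\<in>D. \<forall>y\<in>D. A (x + y) = A x + A y) \<and> (\<forall>c. \<forall>x\<in>D. A (sm c x) = sm c (A x))"

definition closed_operator :: "(complex \<Rightarrow> 'a::ab_group_add \<Rightarrow> 'a) \<Rightarrow> ('a \<Rightarrow> real) set \<Rightarrow> 'a set \<Rightarrow> ('a \<Rightarrow> 'a) \<Rightarrow> bool" where
  "closed_operator sm P D A \<longleftrightarrow> linear_operator sm D A \<and>
     closedin (prod_topology (seminorm_topology P) (seminorm_topology P)) {(x, A x) | x. x \<in> D}"

definition resolvent :: "(complex \<Rightarrow> 'a::ab_group_add \<Rightarrow> 'a) \<Rightarrow> 'a set \<Rightarrow> ('a \<Rightarrow> 'a) \<Rightarrow> complex \<Rightarrow> 'a \<Rightarrow> 'a" where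
  "resolvent sm D A mu = the_inv_into D (\<lambda>x. sm mu x - A x)"

definition resolvent_set :: "(complex \<Rightarrow> 'a::ab_group_add \<Rightarrow> 'a) \<Rightarrow> ('a \<Rightarrow> real) set \<Rightarrow> 'a set \<Rightarrow> ('a \<Rightarrow> 'a) \<Rightarrow> complex set" where
  "resolvent_set sm P D A = {mu. bij_betw (\<lambda>x. sm mu x - A x) D UNIV \<and>
      continuous_map (seminorm_topology P) (seminorm_topology P) (resolvent sm D A mu)}"

fun dom_pow :: "'a set \<Rightarrow> ('a \<Rightarrow> 'a) \<Rightarrow> nat \<Rightarrow> 'a set" where
  "dom_pow D A 0 = UNIV"
| "dom_pow D A (Suc m) = {x \<in> D. A x \<in> dom_pow D A m}"

definition stationary_set :: "('a::ab_group_add \<Rightarrow> real) set \<Rightarrow> 'a set \<Rightarrow> ('a \<Rightarrow> 'a) \<Rightarrow> nat set" where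
  "stationary_set P D A = {k. \<forall>m\<ge>k. dom_pow D A m \<subseteq> seminorm_topology P closure_of dom_pow D A (Suc m)}"

text \<open>n(A); only meaningful when A is stationary dense.\<close>
definition stat_index :: "('a::ab_group_add \<Rightarrow> real) set \<Rightarrow> 'a set \<Rightarrow> ('a \<Rightarrow> 'a) \<Rightarrow> nat" where
  "stat_index P D A = Inf (stationary_set P D A)"

definition stationary_dense :: "('a::ab_group_add \<Rightarrow> real) set \<Rightarrow> 'a set \<Rightarrow> ('a \<Rightarrow> 'a) \<Rightarrow> bool" where
  "stationary_dense P D A \<longleftrightarrow> stationary_set P D A \<noteq> {}"

end

theory Submission
  imports Defs
begin

lemma st_open:
  "openin (seminorm_topology P) = (\<lambda>U. \<forall>x\<in>U. \<exists>F \<epsilon>. finite F \<and> F \<subseteq> P \<and> \<epsilon> > 0 \<and>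
       {y. \<forall>p\<in>F. p (y - x) < \<epsilon>} \<subseteq> U)"
  unfolding seminorm_topology_def
proof (rule topology_inverse', unfold istopology_def, intro conjI allI impI)
  fix S T :: "'a set"
  assume S: "\<forall>x\<in>S. \<exists>F \<epsilon>. finite F \<and> F \<subseteq> P \<and> \<epsilon> > 0 \<and> {y. \<forall>p\<in>F. p (y - x) < \<epsilon>} \<subseteq> S"
    and T: "\<forall>x\<in>T. \<exists>F \<epsilon>. finite F \<and> F \<subseteq> P \<and> \<epsilon> > 0 \<and> {y. \<forall>p\<in>F. p (y - x) < \<epsilon>} \<subseteq> T"
  show "\<forall>x\<in>S \<inter> T. \<exists>F \<epsilon>. finite F \<and> F \<subseteq> P \<and> \<epsilon> > 0 \<and> {y. \<forall>p\<in>F. p (y - x) < \<epsilon>} \<subseteq> S \<inter> T"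
  proof
    fix x assume "x \<in> S \<inter> T"
    then have xs: "x \<in> S" and xt: "x \<in> T" by auto
    from bspec[OF S xs] obtain F1 e1 where 10: "finite F1 \<and> F1 \<subseteq> P \<and> e1 > 0 \<and> {y. \<forall>p\<in>F1. p (y - x) < e1} \<subseteq> S"
      by blast
    note 1 = 10[THEN conjunct1] 10[THEN conjunct2, THEN conjunct1] 10[THEN conjunct2, THEN conjunct2, THEN conjunct1] 10[THEN conjunct2, THEN conjunct2, THEN conjunct2]
    from bspec[OF T xt] obtain F2 e2 where 20: "finite F2 \<and> F2 \<subseteq> P \<and> e2 > 0 \<and> {y. \<forall>p\<in>F2. p (y - x) < e2} \<subseteq> T"
      by blast
    note 2 = 20[THEN conjunct1] 20[THEN conjunct2, THEN conjunct1] 20[THEN conjunct2, THEN conjunct2, THEN conjunct1] 20[THEN conjunct2, THEN conjunct2, THEN conjunct2]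
    have "{y. \<forall>p\<in>F1 \<union> F2. p (y - x) < min e1 e2} \<subseteq> S \<inter> T"
    proof
      fix y assume "y \<in> {y. \<forall>p\<in>F1 \<union> F2. p (y - x) < min e1 e2}"
      then have "y \<in> {y. \<forall>p\<in>F1. p (y - x) < e1}" "y \<in> {y. \<forall>p\<in>F2. p (y - x) < e2}" by auto
      then show "y \<in> S \<inter> T" using 1(4) 2(4) by blast
    qed
    moreover have "finite (F1 \<union> F2)" "F1 \<union> F2 \<subseteq> P" "min e1 e2 > 0" using 1 2 by auto
    ultimately show "\<exists>F \<epsilon>. finite F \<and> F \<subseteq> P \<and> \<epsilon> > 0 \<and> {y. \<forall>p\<in>F. p (y - x) < \<epsilon>} \<subseteq> S \<inter> T"
      by blast
  qed
next
  fix K :: "'a set set"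
  assume KK: "\<forall>S\<in>K. \<forall>x\<in>S. \<exists>F \<epsilon>. finite F \<and> F \<subseteq> P \<and> \<epsilon> > 0 \<and> {y. \<forall>p\<in>F. p (y - x) < \<epsilon>} \<subseteq> S"
  show "\<forall>x\<in>\<Union>K. \<exists>F \<epsilon>. finite F \<and> F \<subseteq> P \<and> \<epsilon> > 0 \<and> {y. \<forall>p\<in>F. p (y - x) < \<epsilon>} \<subseteq> \<Union>K"
  proof
    fix x assume "x \<in> \<Union>K"
    then obtain S where S: "S \<in> K" "x \<in> S" by blast
    from bspec[OF bspec[OF KK S(1)] S(2)] obtain F e where H: "finite F \<and> F \<subseteq> P \<and> e > 0 \<and> {y. \<forall>p\<in>F. p (y - x) < e} \<subseteq> S"
      by blast
    have SK: "S \<subseteq> \<Union>K" using S by blast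
    have "{y. \<forall>p\<in>F. p (y - x) < e} \<subseteq> \<Union>K"
      using H[THEN conjunct2, THEN conjunct2, THEN conjunct2] SK by (rule order_trans)
    then show "\<exists>F \<epsilon>. finite F \<and> F \<subseteq> P \<and> \<epsilon> > 0 \<and> {y. \<forall>p\<in>F. p (y - x) < \<epsilon>} \<subseteq> \<Union>K"
      using H by (intro exI[of _ F] exI[of _ e] conjI) simp_all
  qed
qed

lemma st_topspace: "topspace (seminorm_topology P) = UNIV"
proof -
  have "openin (seminorm_topology P) UNIV"
    unfolding st_open by (intro ballI exI[of _ "{}"] exI[of _ 1]) auto
  then show ?thesis using openin_subset by blast
qed

lemma dom_sub:
  assumes vs: "vector_space sm" and lin: "linear_operator sm D A"
  shows "(x \<in> dom_pow D A m \<longrightarrow> y \<in> dom_pow D A m \<longrightarrow> x + y \<in> dom_pow D A m) \<and>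
         (x \<in> dom_pow D A m \<longrightarrow> sm c x \<in> dom_pow D A m)"
proof (induction m arbitrary: x y c)
  case 0 then show ?case by simp
next
  case (Suc m)
  then show ?case using lin unfolding linear_operator_def by auto
qed

lemma D_diff:
  assumes vs: "vector_space sm" and lin: "linear_operator sm D A" and "x \<in> D" "y \<in> D"
  shows "x - y \<in> D" "A (x - y) = A x - A y"
proof -
  interpret V: vector_space sm by (rule vs)
  have m: "sm (-1) y \<in> D" "A (sm (-1) y) = sm (-1) (A y)"
    using lin assms unfolding linear_operator_def by blast+
  have e: "x - y = x + sm (-1) y" by simp
  have "x + sm (-1) y \<in> D" "A (x + sm (-1) y) = A x + A (sm (-1) y)"
    using m lin assms unfolding linear_operator_def by blast+
  then show "x - y \<in> D" "A (x - y) = A x - A y" unfolding e using m(2) by simp_all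
qed

lemma D_scale:
  assumes "linear_operator sm D A" "x \<in> D"
  shows "sm c x \<in> D" "A (sm c x) = sm c (A x)"
  using assms unfolding linear_operator_def by auto

lemma sn_diff:
  assumes vs: "vector_space sm" and sn: "seminorm sm p"
  shows "p (x - y) \<le> p x + p y"
proof -
  interpret V: vector_space sm by (rule vs)
  have e: "x - y = x + sm (-1) y" by simp
  have t: "p (x + sm (-1) y) \<le> p x + p (sm (-1) y)" using sn unfolding seminorm_def by blast
  have m: "p (sm (-1) y) = cmod (-1) * p y" using sn unfolding seminorm_def by blast
  have m2: "p (sm (-1) y) = p y" unfolding m by simp
  show ?thesis unfolding e using t m2 by linarith
qed

locale resfacts =
  fixes sm :: "complex \<Rightarrow> 'a::ab_group_add \<Rightarrow> 'a" and D A mu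
  assumes vs: "vector_space sm" and lin: "linear_operator sm D A"
    and bij: "bij_betw (\<lambda>x. sm mu x - A x) D UNIV"
begin

abbreviation "R \<equiv> resolvent sm D A mu"

lemma inj: "inj_on (\<lambda>x. sm mu x - A x) D" by (rule bij_betw_imp_inj_on[OF bij])
lemma img: "y \<in> (\<lambda>x. sm mu x - A x) ` D" unfolding bij_betw_imp_surj_on[OF bij] by (rule UNIV_I)

lemma R_in: "R y \<in> D"
  unfolding resolvent_def using the_inv_into_into[OF inj img] by blast

lemma R_eq: "sm mu (R y) - A (R y) = y"
  unfolding resolvent_def using f_the_inv_into_f[OF inj img] .

lemma R_inv: "x \<in> D \<Longrightarrow> R (sm mu x - A x) = x"
  unfolding resolvent_def using the_inv_into_f_f[OF inj] by blast

lemma AR: "A (R y) = sm mu (R y) - y"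
  using R_eq[of y] by (metis add_diff_cancel_left' diff_add_cancel)

lemma commute:
  assumes x: "x \<in> D" shows "A (R x) = R (A x)"
proof -
  define u where "u = A (R x)"
  have u: "u = sm mu (R x) - x" unfolding u_def by (rule AR)
  have uD: "u \<in> D" unfolding u using D_diff(1)[OF vs lin D_scale(1)[OF lin R_in] x] .
  have "A u = sm mu (A (R x)) - A x"
    unfolding u using D_diff(2)[OF vs lin D_scale(1)[OF lin R_in] x] D_scale(2)[OF lin R_in] by simp
  then have "sm mu u - A u = A x" unfolding u_def by simp
  then show ?thesis using R_inv[OF uD] unfolding u_def by simp
qed

lemma R_dom: "x \<in> dom_pow D A m \<Longrightarrow> R x \<in> dom_pow D A (Suc m)"
proof (induction m arbitrary: x)
  case 0 then show ?case using R_in by simp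
next
  case (Suc m)
  then have x: "x \<in> D" "A x \<in> dom_pow D A m" by auto
  have "A (R x) \<in> dom_pow D A (Suc m)" using commute[OF x(1)] Suc.IH[OF x(2)] by simp
  then show ?case using R_in by simp
qed

end

theorem lemma2p4:
  fixes sm :: "complex \<Rightarrow> 'a::ab_group_add \<Rightarrow> 'a"
    and P :: "('a \<Rightarrow> real) set"
    and D :: "'a set" and A :: "'a \<Rightarrow> 'a"
    and lam :: "nat \<Rightarrow> complex" and C k :: real
  assumes "seq_complete_lcs sm P"
    and "closed_operator sm P D A"
    and "\<And>n. lam n \<in> resolvent_set sm P D A"
    and "filterlim (\<lambda>n. cmod (lam n)) at_top sequentially"
    and "C > 0" and "k \<ge> -1"
    and "\<forall>p\<in>P. \<exists>q\<in>P. \<forall>x n. p (resolvent sm D A (lam n) x) \<le> C * cmod (lam n) powr k * q x"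
  shows "stationary_dense P D A \<and> real (stat_index P D A) \<le> k + 2"
proof -
  have vs: "vector_space sm" and sem: "\<And>p. p\<in>P \<Longrightarrow> seminorm sm p"
    using assms(1) unfolding seq_complete_lcs_def by auto
  interpret V: vector_space sm by (rule vs)
  have lin: "linear_operator sm D A" using assms(2) closed_operator_def by blast
  define R where "R n = resolvent sm D A (lam n)" for n
  have rf: "\<And>n. resfacts sm D A (lam n)"
    using assms(3) vs lin unfolding resolvent_set_def resfacts_def by blast
  have ev1: "eventually (\<lambda>n. cmod (lam n) \<ge> 1) sequentially"
    using assms(4) by (simp add: filterlim_at_top)
  have sn_scale: "\<And>p c x. p\<in>P \<Longrightarrow> p (sm c x) = cmod c * p x" using sem unfolding seminorm_def by blast
  have sn_add: "\<And>p x y. p\<in>P \<Longrightarrow> p (x + y) \<le> p x + p y" using sem unfolding seminorm_def by blast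
  have sn_nn: "\<And>p x. p\<in>P \<Longrightarrow> 0 \<le> p x" using sem unfolding seminorm_def by blast
  have RA: "\<And>n x. x \<in> D \<Longrightarrow> sm (lam n) (R n x) - x = R n (A x)"
  proof -
    fix n x assume x: "x \<in> D"
    have "A (R n x) = sm (lam n) (R n x) - x" unfolding R_def by (rule resfacts.AR[OF rf])
    moreover have "A (R n x) = R n (A x)" unfolding R_def by (rule resfacts.commute[OF rf x])
    ultimately show "sm (lam n) (R n x) - x = R n (A x)" by simp
  qed
  have key: "\<And>x p. x \<in> dom_pow D A (Suc j) \<Longrightarrow> p \<in> P \<Longrightarrow> \<exists>B\<ge>0. eventually (\<lambda>n.
      p (sm (lam n) (R n x) - x) \<le> B * (cmod (lam n) powr -1 + cmod (lam n) powr (k - real j))) sequentially"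
    for j
  proof (induction j)
    case 0
    then have x: "x \<in> D" by simp
    obtain q where q: "q \<in> P" "\<forall>x n. p (R n x) \<le> C * cmod (lam n) powr k * q x"
      using assms(7) 0 unfolding R_def by blast
    have qn: "0 \<le> q (A x)" using sn_nn[OF q(1)] .
    show ?case
    proof (intro exI[of _ "C * q (A x)"] conjI always_eventually allI)
      show "0 \<le> C * q (A x)" using qn assms(5) by simp
      fix n
      have "p (sm (lam n) (R n x) - x) = p (R n (A x))" using RA[OF x] by simp
      also have "\<dots> \<le> C * cmod (lam n) powr k * q (A x)" using q(2) by blast
      also have "\<dots> \<le> C * q (A x) * (cmod (lam n) powr -1 + cmod (lam n) powr (k - real 0))"
        using qn assms(5) by (simp add: algebra_simps)
      finally show "p (sm (lam n) (R n x) - x) \<le> C * q (A x) * (cmod (lam n) powr -1 + cmod (lam n) powr (k - real 0))" .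
    qed
  next
    case (Suc j)
    then have x: "x \<in> D" "A x \<in> dom_pow D A (Suc j)" by auto
    obtain B where B: "B \<ge> 0" "eventually (\<lambda>n. p (sm (lam n) (R n (A x)) - A x)
        \<le> B * (cmod (lam n) powr -1 + cmod (lam n) powr (k - real j))) sequentially"
      using Suc.IH[OF x(2) Suc.prems(2)] by blast
    have P0: "0 \<le> p (A x)" using sn_nn[OF Suc.prems(2)] .
    show ?case
    proof (intro exI[of _ "p (A x) + B"] conjI)
      show "0 \<le> p (A x) + B" using P0 B(1) by simp
      show "eventually (\<lambda>n. p (sm (lam n) (R n x) - x) \<le> (p (A x) + B) *
          (cmod (lam n) powr -1 + cmod (lam n) powr (k - real (Suc j)))) sequentially"
        using B(2) ev1
      proof eventually_elim
        case (elim n)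
        define l where "l = lam n"
        define L where "L = cmod l"
        define z where "z = R n (A x)"
        define w where "w = sm l z - A x"
        have L1: "L \<ge> 1" using elim(2) unfolding L_def l_def by simp
        have l0: "l \<noteq> 0" using L1 unfolding L_def by auto
        have zz: "z = sm (inverse l) (A x + w)"
          unfolding w_def using l0 by simp
        have "p z = inverse L * p (A x + w)"
          unfolding zz using sn_scale[OF Suc.prems(2)] by (simp add: L_def norm_inverse)
        also have "\<dots> \<le> inverse L * (p (A x) + p w)"
          using sn_add[OF Suc.prems(2)] L1 by (simp add: mult_left_mono)
        also have "\<dots> \<le> inverse L * (p (A x) + B * (L powr -1 + L powr (k - real j)))"
          using elim(1) L1 unfolding w_def z_def L_def l_def by (simp add: mult_left_mono)
        finally have pz: "p z \<le> inverse L * (p (A x) + B * (inverse L + L powr (k - real j)))"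
          using L1 by (simp add: powr_neg_one inverse_eq_divide)
        define a where "a = inverse L"
        define b where "b = L powr (k - real j)"
        have a0: "0 < a" "a \<le> 1" unfolding a_def using L1 by (auto simp: inverse_le_1_iff)
        have b0: "0 \<le> b" unfolding b_def by simp
        have e2: "L powr (k - real (Suc j)) = b * a"
          unfolding a_def b_def using L1
          by (simp add: powr_diff powr_neg_one divide_inverse diff_diff_eq[symmetric] del: diff_diff_eq)
        have aa: "a * a \<le> a" using a0 by (simp add: mult_le_cancel_left1)
        have "a * (p (A x) + B * (a + b)) \<le> (p (A x) + B) * (a + b * a)"
        proof -
          have "B * (a * a) \<le> B * a" using aa B(1) by (simp add: mult_left_mono)
          moreover have "0 \<le> p (A x) * (b * a)" using P0 a0 b0 by simp
          ultimately show ?thesis by (simp add: algebra_simps)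
        qed
        then have "p z \<le> (p (A x) + B) * (L powr -1 + L powr (k - real (Suc j)))"
          using pz e2 L1 unfolding a_def b_def by (simp add: powr_neg_one inverse_eq_divide)
        then show ?case unfolding z_def L_def l_def using RA[OF x(1)] by simp
      qed
    qed
  qed
  define j0 where "j0 = nat (\<lfloor>k\<rfloor> + 2)"
  have fl: "of_int \<lfloor>k\<rfloor> \<le> k" "k < of_int \<lfloor>k\<rfloor> + 1" by linarith+
  have fl0: "\<lfloor>k\<rfloor> \<ge> -1" using assms(6) by linarith
  have rj: "real j0 = of_int \<lfloor>k\<rfloor> + 2" unfolding j0_def using fl0 by simp
  have j0a: "real j0 \<le> k + 2" and j0b: "k + 1 < real j0" using rj fl by linarith+
  have j0c: "j0 \<ge> 1" unfolding j0_def using fl0 by simp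
  have stat: "j0 \<in> stationary_set P D A"
    unfolding stationary_set_def
  proof (intro CollectI allI impI subsetI)
    fix m x assume m: "j0 \<le> m" and x: "x \<in> dom_pow D A m"
    obtain j where mj: "m = Suc j" using m j0c by (cases m) auto
    have kj: "k - real j < 0" using m j0b mj by simp
    show "x \<in> seminorm_topology P closure_of dom_pow D A (Suc m)"
      unfolding in_closure_of st_topspace
    proof (intro conjI UNIV_I allI impI)
      fix T assume T: "x \<in> T \<and> openin (seminorm_topology P) T"
      then obtain F e where F: "finite F" "F \<subseteq> P" "e > 0" "{y. \<forall>p\<in>F. p (y - x) < e} \<subseteq> T"
        unfolding st_open by blast
      have "\<forall>p\<in>F. eventually (\<lambda>n. p (sm (lam n) (R n x) - x) < e) sequentially"
      proof
        fix p assume p: "p \<in> F"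
        then obtain B where B: "B \<ge> 0" "eventually (\<lambda>n. p (sm (lam n) (R n x) - x)
            \<le> B * (cmod (lam n) powr -1 + cmod (lam n) powr (k - real j))) sequentially"
          using key[of x j p] x mj F(2) by blast
        have t1: "((\<lambda>n. cmod (lam n) powr -1) \<longlongrightarrow> 0) sequentially"
          by (rule tendsto_neg_powr[OF _ assms(4)]) simp
        have t2: "((\<lambda>n. cmod (lam n) powr (k - real j)) \<longlongrightarrow> 0) sequentially"
          by (rule tendsto_neg_powr[OF kj assms(4)])
        have "((\<lambda>n. B * (cmod (lam n) powr -1 + cmod (lam n) powr (k - real j))) \<longlongrightarrow> B * (0 + 0)) sequentially"
          by (rule tendsto_mult[OF tendsto_const tendsto_add[OF t1 t2]])
        then have "eventually (\<lambda>n. B * (cmod (lam n) powr -1 + cmod (lam n) powr (k - real j)) < e) sequentially"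
          using F(3) by (simp add: order_tendstoD(2))
        then show "eventually (\<lambda>n. p (sm (lam n) (R n x) - x) < e) sequentially"
          using B(2) by eventually_elim simp
      qed
      then have "eventually (\<lambda>n. \<forall>p\<in>F. p (sm (lam n) (R n x) - x) < e) sequentially"
        by (rule eventually_ball_finite[OF F(1)])
      then obtain n where n: "\<forall>p\<in>F. p (sm (lam n) (R n x) - x) < e"
        unfolding eventually_sequentially by blast
      have "R n x \<in> dom_pow D A (Suc m)" unfolding R_def using resfacts.R_dom[OF rf x] .
      then have "sm (lam n) (R n x) \<in> dom_pow D A (Suc m)" using dom_sub[OF vs lin, of "R n x" "Suc m" "R n x" "lam n"] by blast
      moreover have "sm (lam n) (R n x) \<in> T" using F(4) n by blast
      ultimately show "\<exists>y. y \<in> dom_pow D A (Suc m) \<and> y \<in> T" by blast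
    qed
  qed
  have "stat_index P D A \<le> j0" unfolding stat_index_def using stat by (simp add: cInf_lower)
  then have "real (stat_index P D A) \<le> real j0" by simp
  then show ?thesis using j0a stat unfolding stationary_dense_def by auto
qed

end
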